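(* Let $p$ be a prime and let $A$ be a sequence of length $4p-4$ over $(\mathbb{Z}/p\mathbb{Z})^2$ which contains no zero-sum subsequence of length $p$ and in which every element has multiplicity $<\frac{p}{2}$. Then no (affine) line in $(\mathbb{Z}/p\mathbb{Z})^2$ contains $\frac{3p}{2}$ elements of $A$, i.e. for every line $\ell$ the number of terms of $A$ (counted with multiplicity) lying on $\ell$ is less than $\frac{3p}{2}$.
   Context: Sequences are finite, unordered, may contain repeated elements; a zero-sum subsequence is a subsequence (terms at distinct positions) whose terms sum to $0$. The multiplicity of an element is its number of occurrences. *)

theory Defs
  imports "HOL-Library.Multiset" "HOL-Computational_Algebra.Primes" Complex_Main
begin

text \<open>Elements of (Z/pZ)^2 are represented by their canonical representatives:
  pairs of integers with both components in {0..<p}.\<close>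
definition zp2 :: "int \<Rightarrow> (int \<times> int) set" where
  "zp2 p = {0..<p} \<times> {0..<p}"

definition zero_sum_zp2 :: "int \<Rightarrow> (int \<times> int) multiset \<Rightarrow> bool" where
  "zero_sum_zp2 p B \<longleftrightarrow>
     (\<Sum>\<^sub># (image_mset fst B)) mod p = 0 \<and> (\<Sum>\<^sub># (image_mset snd B)) mod p = 0"

definition line_zp2 :: "int \<Rightarrow> (int \<times> int) set \<Rightarrow> bool" where
  "line_zp2 p L \<longleftrightarrow> (\<exists>a b c. \<not> (a mod p = 0 \<and> b mod p = 0) \<and>
      L = {x \<in> zp2 p. (a * fst x + b * snd x - c) mod p = 0})"

end

theory Submission
  imports Defs "HOL-Number_Theory.Cong" begin

definition psum :: "int \<Rightarrow> int set \<Rightarrow> int set \<Rightarrow> int set" where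
  "psum p X Y = (\<lambda>(x,y). (x + y) mod p) ` (X \<times> Y)"

lemma closed_all:
  fixes p d :: int
  assumes "prime p" "X \<subseteq> {0..<p}" "x0 \<in> X" "d mod p \<noteq> 0"
    and cl: "\<And>x. x \<in> X \<Longrightarrow> (x + d) mod p \<in> X"
  shows "X = {0..<p}"
proof
  show "X \<subseteq> {0..<p}" by fact
  have it: "(x0 + int n * d) mod p \<in> X" for n :: nat
  proof (induction n)
    case 0 then show ?case using assms by (auto simp: subset_iff)
  next
    case (Suc n)
    have "(x0 + int (Suc n) * d) mod p = ((x0 + int n * d) mod p + d) mod p"
      by (simp add: algebra_simps) (metis mod_add_right_eq)
    then show ?case using cl[OF Suc] by simp
  qed
  have cop: "coprime d p"
    using assms(1,4) by (metis dvd_eq_mod_eq_0 prime_imp_coprime coprime_commute)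
  then obtain u where u: "[d * u = 1] (mod p)" using cong_solve_coprime_int by blast
  show "{0..<p} \<subseteq> X"
  proof
    fix z assume z: "z \<in> {0..<p}"
    define n where "n = nat ((u * (z - x0)) mod p)"
    have p0: "p > 0" using assms(1) prime_gt_0_int by blast
    have nn: "int n = (u * (z - x0)) mod p" using p0 by (simp add: n_def)
    have "[x0 + int n * d = x0 + (u * (z - x0)) * d] (mod p)"
      unfolding nn by (intro cong_add cong_refl cong_mult) (simp add: cong_def)
    also have "[x0 + (u * (z - x0)) * d = x0 + (d * u) * (z - x0)] (mod p)"
      by (simp add: algebra_simps cong_def)
    also have "[x0 + (d * u) * (z - x0) = x0 + 1 * (z - x0)] (mod p)"
      by (intro cong_add cong_refl cong_mult u)
    finally have "(x0 + int n * d) mod p = z mod p" by (simp add: cong_def)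
    also have "\<dots> = z" using z by simp
    finally show "z \<in> X" using it[of n] by simp
  qed
qed

lemma psum_sub: "p > 0 \<Longrightarrow> psum p X Y \<subseteq> {0..<p}"
  by (auto simp: psum_def)

lemma cd:
  fixes p :: int
  assumes "prime p" "X \<subseteq> {0..<p}" "Y \<subseteq> {0..<p}" "X \<noteq> {}" "Y \<noteq> {}"
  shows "min p (int (card X) + int (card Y) - 1) \<le> int (card (psum p X Y))"
  using assms(2-)
proof (induction "card Y" arbitrary: X Y rule: less_induct)
  case less
  have p0: "p > 0" using assms(1) prime_gt_0_int by blast
  have finX: "finite X" using less.prems(1) finite_subset by blast
  have finY: "finite Y" using less.prems(2) finite_subset by blast
  have finS: "finite (psum p X Y)" using psum_sub[OF p0] finite_subset by blast
  obtain y0 where y0: "y0 \<in> Y" using less.prems by blast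
  obtain x0 where x0: "x0 \<in> X" using less.prems by blast
  show ?case
  proof (cases "card Y = 1")
    case True
    then have Y: "Y = {y0}" using y0 by (metis card_1_singletonE singletonD)
    have "psum p X Y = (\<lambda>x. (x + y0) mod p) ` X" by (auto simp: psum_def Y)
    moreover have "inj_on (\<lambda>x. (x + y0) mod p) X"
    proof
      fix a b assume "a \<in> X" "b \<in> X" "(a + y0) mod p = (b + y0) mod p"
      then have "a mod p = b mod p" by (metis cong_add_rcancel cong_def)
      then show "a = b" using \<open>a \<in> X\<close> \<open>b \<in> X\<close> less.prems(1) by (auto simp: subset_iff)
    qed
    ultimately show ?thesis using True by (simp add: card_image)
  next
    case False
    have "card Y \<noteq> 0" using finY less.prems(4) by simp
    then have c2: "card Y \<ge> 2" using False by linarith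
    show ?thesis
    proof (cases "\<exists>a\<in>X. \<exists>b\<in>Y. \<exists>y\<in>Y. (y + a - b) mod p \<notin> X")
      case False
      have "\<exists>y1\<in>Y. y1 \<noteq> y0"
      proof (rule ccontr)
        assume "\<not> ?thesis"
        then have "Y \<subseteq> {y0}" by auto
        then have "card Y \<le> card {y0}" by (intro card_mono) auto
        then have "card Y \<le> 1" by simp
        then show False using c2 by simp
      qed
      then obtain y1 where y1: "y1 \<in> Y" "y1 \<noteq> y0" by blast
      have "(y1 - y0) mod p \<noteq> 0"
      proof
        assume "(y1 - y0) mod p = 0"
        then have "y1 mod p = y0 mod p" by (simp add: mod_eq_dvd_iff dvd_eq_mod_eq_0)
        then show False using y1 y0 less.prems(2) by (auto simp: subset_iff)
      qed
      then have "X = {0..<p}"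
      proof (rule closed_all[OF assms(1) less.prems(1) x0])
        fix x assume "x \<in> X"
        then have "(y1 + x - y0) mod p \<in> X" using False y0 y1 by blast
        then show "(x + (y1 - y0)) mod p \<in> X" by (simp add: algebra_simps)
      qed
      then have "(\<lambda>x. (x + y0) mod p) ` X = {0..<p}"
        apply auto
        subgoal for z apply (rule image_eqI[of _ _ "(z - y0) mod p"]) using p0 by (auto simp: mod_add_left_eq)
        done
      moreover have "(\<lambda>x. (x + y0) mod p) ` X \<subseteq> psum p X Y" using y0 by (auto simp: psum_def)
      ultimately have "psum p X Y = {0..<p}" using psum_sub[OF p0] by blast
      then show ?thesis using p0 by simp
    next
      case True
      then obtain a b y where aby: "a \<in> X" "b \<in> Y" "y \<in> Y" "(y + a - b) mod p \<notin> X" by blast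
      define e where "e = a - b"
      define X' where "X' = X \<union> (\<lambda>y. (y + e) mod p) ` Y"
      define Y' where "Y' = {y\<in>Y. (y + e) mod p \<in> X}"
      have Y'sub: "Y' \<subseteq> Y" by (auto simp: Y'_def)
      have bY': "b \<in> Y'" using aby less.prems(1) by (auto simp: Y'_def e_def subset_iff)
      have yY': "y \<notin> Y'" using aby by (auto simp: Y'_def e_def algebra_simps)
      have lt: "card Y' < card Y" using Y'sub aby(3) yY' finY by (intro psubset_card_mono) auto
      have X'sub: "X' \<subseteq> {0..<p}" using less.prems(1) p0 by (auto simp: X'_def)
      have injY: "inj_on (\<lambda>y. (y + e) mod p) Y"
      proof
        fix u v assume "u \<in> Y" "v \<in> Y" "(u + e) mod p = (v + e) mod p"
        then have "u mod p = v mod p" by (metis cong_add_rcancel cong_def)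
        then show "u = v" using \<open>u \<in> Y\<close> \<open>v \<in> Y\<close> less.prems(2) by (auto simp: subset_iff)
      qed
      have "X' = X \<union> (\<lambda>y. (y + e) mod p) ` (Y - Y')"
        by (auto simp: X'_def Y'_def)
      moreover have "X \<inter> (\<lambda>y. (y + e) mod p) ` (Y - Y') = {}"
        by (auto simp: Y'_def)
      moreover have "card ((\<lambda>y. (y + e) mod p) ` (Y - Y')) = card (Y - Y')"
        using injY by (intro card_image) (auto intro: inj_on_subset)
      ultimately have cX': "card X' = card X + card (Y - Y')"
        using finX finY by (simp add: card_Un_disjoint)
      have cYY: "card (Y - Y') = card Y - card Y'" using Y'sub finY card_Diff_subset finite_subset by blast
      have "min p (int (card X') + int (card Y') - 1) \<le> int (card (psum p X' Y'))"
        using less.hyps[OF lt X'sub] Y'sub less.prems bY' by (auto simp: X'_def)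
      moreover have "psum p X' Y' \<subseteq> psum p X Y"
      proof
        fix z assume "z \<in> psum p X' Y'"
        then obtain u v where uv: "u \<in> X'" "v \<in> Y'" "z = (u + v) mod p" by (auto simp: psum_def)
        show "z \<in> psum p X Y"
        proof (cases "u \<in> X")
          case True then show ?thesis using uv Y'sub by (auto simp: psum_def)
        next
          case False
          then obtain w where w: "w \<in> Y" "u = (w + e) mod p" using uv by (auto simp: X'_def)
          have vX: "(v + e) mod p \<in> X" using uv by (auto simp: Y'_def)
          have "z = ((w + e) mod p + v) mod p" using uv w by simp
          also have "\<dots> = (w + e + v) mod p" by (rule mod_add_left_eq)
          also have "w + e + v = v + e + w" by simp
          also have "(v + e + w) mod p = ((v + e) mod p + w) mod p" by (rule mod_add_left_eq[symmetric])
          finally have "z = ((v + e) mod p + w) mod p" .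
          then show ?thesis using vX w by (force simp: psum_def)
        qed
      qed
      then have "card (psum p X' Y') \<le> card (psum p X Y)" using finS card_mono by blast
      moreover have "card X' + card Y' = card X + card Y" using cX' cYY Y'sub finY card_mono by fastforce
      ultimately show ?thesis by linarith
    qed
  qed
qed


definition ksums :: "int \<Rightarrow> int multiset \<Rightarrow> nat \<Rightarrow> int set" where
  "ksums p S k = {(\<Sum>\<^sub># T) mod p | T. T \<subseteq># S \<and> size T = k}"

lemma ksums_sub: "p > 0 \<Longrightarrow> ksums p S k \<subseteq> {0..<p}"
  by (auto simp: ksums_def)

lemma size_eq_sum_count: "size M = (\<Sum>x\<in>set_mset M. count M x)"
  by (simp add: size_multiset_overloaded_eq)

lemma ksums_bound:
  fixes p :: int
  assumes "prime p" "1 \<le> k"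
  shows "set_mset S \<subseteq> {0..<p} \<Longrightarrow> k \<le> size S \<Longrightarrow> (\<And>x. count S x \<le> k)
     \<Longrightarrow> min p (int (size S) - int k + 1) \<le> int (card (ksums p S k))"
  using assms(2)
proof (induction k arbitrary: S rule: nat_induct_at_least)
  case base
  have p0: "p > 0" using assms(1) prime_gt_0_int by blast
  have "set_mset S \<subseteq> ksums p S 1"
  proof
    fix x assume x: "x \<in># S"
    then have "x mod p = x" using base.prems(1) by auto
    moreover have "{#x#} \<subseteq># S" using x by simp
    ultimately show "x \<in> ksums p S 1" unfolding ksums_def
      by (auto intro!: exI[of _ "{#x#}"])
  qed
  then have "card (set_mset S) \<le> card (ksums p S 1)"
    using ksums_sub[OF p0] finite_subset card_mono by (metis finite_atLeastLessThan_int)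
  moreover have "size S = card (set_mset S)"
  proof -
    have "size S = (\<Sum>x\<in>set_mset S. count S x)" by (rule size_eq_sum_count)
    also have "\<dots> = (\<Sum>x\<in>set_mset S. 1)"
      using base.prems(3) by (intro sum.cong refl) (metis One_nat_def count_eq_zero_iff le_SucE le_zero_eq)
    finally show ?thesis by simp
  qed
  ultimately show ?case by simp
next
  case (Suc k)
  have p0: "p > 0" using assms(1) prime_gt_0_int by blast
  have p2: "p \<ge> 2" using assms(1) prime_ge_2_int by blast
  define n where "n = size S"
  define M where "M = {x. count S x = Suc k}"
  have Msub: "M \<subseteq> set_mset S" by (auto simp: M_def simp flip: count_greater_zero_iff)
  have finM: "finite M" using Msub finite_subset by blast
  have "(\<Sum>x\<in>M. count S x) \<le> (\<Sum>x\<in>set_mset S. count S x)"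
    using Msub by (intro sum_mono2) auto
  then have Mk: "card M * Suc k \<le> n" by (simp add: M_def n_def size_eq_sum_count)
  obtain x0 where x0: "x0 \<in># S" using Suc.prems(2) by (metis Suc_le_D multiset_nonemptyE size_empty Zero_not_Suc le_0_eq)
  define B where "B = (if M = {} then {x0} else M)"
  have Bsub: "B \<subseteq> set_mset S" using Msub x0 by (auto simp: B_def)
  have finB: "finite B" using Bsub finite_subset by blast
  have Bne: "B \<noteq> {}" by (auto simp: B_def)
  have MB: "M \<subseteq> B" by (auto simp: B_def)
  have Bn: "card B + k \<le> n"
  proof (cases "M = {}")
    case True then show ?thesis using Suc.prems(2) by (simp add: B_def n_def)
  next
    case False
    then have "card M \<ge> 1" using finM by (simp add: Suc_leI card_gt_0_iff)
    then have k1: "k \<le> card M * k" using mult_le_mono1[of 1 "card M" k] by simp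
    have "card M * Suc k = card M + card M * k" by simp
    then have "card M + k \<le> n" using Mk k1 by linarith
    then show ?thesis using False by (simp add: B_def)
  qed
  define S' where "S' = S - mset_set B"
  have BS: "mset_set B \<subseteq># S"
  proof (rule mset_subset_eqI)
    fix x show "count (mset_set B) x \<le> count S x"
      using Bsub finB by (cases "x \<in> B") (auto simp: count_mset_set)
  qed
  have SS: "S = S' + mset_set B" using BS by (simp add: S'_def)
  have sizeS': "size S' = n - card B" using BS by (simp add: S'_def n_def size_Diff_submset)
  have cS': "count S' x \<le> k" for x
  proof (cases "x \<in> B")
    case True then show ?thesis using Suc.prems(3)[of x] finB by (simp add: S'_def count_mset_set)
  next
    case False
    then have "count S x \<noteq> Suc k" using MB by (auto simp: M_def)
    then show ?thesis using Suc.prems(3)[of x] False finB by (simp add: S'_def count_mset_set)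
  qed
  have setS': "set_mset S' \<subseteq> {0..<p}" using Suc.prems(1) by (auto simp: S'_def dest: in_diffD)
  have IH: "min p (int (size S') - int k + 1) \<le> int (card (ksums p S' k))"
    using Suc.IH[OF setS' _ cS'] sizeS' Bn by simp
  have "min p (int (size S') - int k + 1) \<ge> 1" using sizeS' Bn p2 by simp
  then have "card (ksums p S' k) > 0" using IH by linarith
  then have Kne: "ksums p S' k \<noteq> {}" by auto
  have Bp: "B \<subseteq> {0..<p}" using Bsub Suc.prems(1) by blast
  have CD: "min p (int (card B) + int (card (ksums p S' k)) - 1) \<le> int (card (psum p B (ksums p S' k)))"
    by (rule cd[OF assms(1) Bp ksums_sub[OF p0] Bne Kne])
  have incl: "psum p B (ksums p S' k) \<subseteq> ksums p S (Suc k)"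
  proof
    fix z assume "z \<in> psum p B (ksums p S' k)"
    then obtain b T where bT: "b \<in> B" "T \<subseteq># S'" "size T = k" "z = (b + (\<Sum>\<^sub># T) mod p) mod p"
      by (auto simp: psum_def ksums_def)
    have "{#b#} \<subseteq># mset_set B" using bT(1) finB by (simp add: count_mset_set)
    then have "T + {#b#} \<subseteq># S' + mset_set B" using bT(2) by (rule subset_mset.add_mono[rotated])
    then have sub: "add_mset b T \<subseteq># S" using SS by simp
    have "z = (\<Sum>\<^sub># (add_mset b T)) mod p" using bT(4) by (simp add: mod_add_right_eq)
    then show "z \<in> ksums p S (Suc k)" using sub bT(3) unfolding ksums_def by force
  qed
  have "card (psum p B (ksums p S' k)) \<le> card (ksums p S (Suc k))"
    using incl by (intro card_mono) (auto intro: finite_subset[OF ksums_sub[OF p0]])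
  moreover have "int (size S') = int n - int (card B)" using sizeS' Bn by simp
  moreover have cB: "card B \<ge> 1" using finB Bne by (simp add: Suc_leI card_gt_0_iff)
  ultimately show ?case using CD IH Bn unfolding n_def min_def by (auto split: if_splits)
qed


lemma lift_sub:
  "R \<subseteq># image_mset g S \<Longrightarrow> \<exists>B. B \<subseteq># S \<and> image_mset g B = R"
proof (induction S arbitrary: R)
  case empty then show ?case by simp
next
  case (add x S)
  show ?case
  proof (cases "g x \<in># R")
    case True
    then have "R - {#g x#} \<subseteq># image_mset g S" using add.prems
      by (metis image_mset_add_mset insert_DiffM subset_mset.add_le_cancel_left add_mset_add_single
          add.commute subset_mset.le_diff_conv2 diff_single_eq_union)
    then obtain B where B: "B \<subseteq># S" "image_mset g B = R - {#g x#}" using add.IH by blast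
    then have "add_mset x B \<subseteq># add_mset x S" "image_mset g (add_mset x B) = R"
      using True by auto
    then show ?thesis by blast
  next
    case False
    have "R \<subseteq># image_mset g S"
    proof (rule mset_subset_eqI)
      fix y show "count R y \<le> count (image_mset g S) y"
        using mset_subset_eq_count[OF add.prems, of y] False by (cases "y = g x") (auto simp: not_in_iff)
    qed
    then obtain B where B: "B \<subseteq># S" "image_mset g B = R" using add.IH by blast
    then have "B \<subseteq># add_mset x S" by (metis subset_mset.order_trans subset_mset.le_add_same_cancel2 subset_mset.zero_le add_mset_add_single subset_mset.add_mono subset_mset.refl add.commute add_0)
    then show ?thesis using B by blast
  qed
qed


lemma sum_lin:
  fixes g h :: "'a \<Rightarrow> int"
  shows "(\<Sum>\<^sub># (image_mset (\<lambda>x. a * g x + b * h x - c) B))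
     = a * (\<Sum>\<^sub># (image_mset g B)) + b * (\<Sum>\<^sub># (image_mset h B)) - int (size B) * c"
  by (induction B) (auto simp: algebra_simps)

lemma dvd_sum_img:
  fixes f :: "'a \<Rightarrow> int"
  shows "(\<forall>x\<in>#B. p dvd f x) \<Longrightarrow> p dvd (\<Sum>\<^sub># (image_mset f B))"
  by (induction B) auto

lemma dvd_help:
  fixes p X Y Z :: int
  assumes "p dvd X + Y - Z" "p dvd X" "p dvd Z" shows "p dvd Y"
proof -
  have "Y = (X + Y - Z) - X + Z" by simp
  then show ?thesis using assms by (metis dvd_add dvd_diff)
qed

lemma key:
  fixes p a b c :: int and S :: "'a multiset" and g h :: "'a \<Rightarrow> int"
  assumes pr: "prime p"
    and rng: "\<forall>x\<in>#S. g x \<in> {0..<p} \<and> h x \<in> {0..<p}"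
    and ln: "\<forall>x\<in>#S. (a * g x + b * h x - c) mod p = 0"
    and bnz: "b mod p \<noteq> 0"
    and inj: "inj_on (\<lambda>x. (g x, h x)) (set_mset S)"
    and cnt: "\<forall>x. 2 * int (count S x) < p"
    and big: "3 * p \<le> 2 * int (size S)"
  shows "\<exists>B. B \<subseteq># S \<and> int (size B) = p \<and> (\<Sum>\<^sub># (image_mset g B)) mod p = 0
            \<and> (\<Sum>\<^sub># (image_mset h B)) mod p = 0"
proof -
  have p0: "p > 0" using pr prime_gt_0_int by blast
  have p2: "p \<ge> 2" using pr prime_ge_2_int by blast
  have bnd: "\<not> p dvd b" using bnz by (simp add: dvd_eq_mod_eq_0)
  have injg: "inj_on g (set_mset S)"
  proof
    fix x y assume xy: "x \<in># S" "y \<in># S" "g x = g y"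
    have "p dvd (a * g x + b * h x - c)" "p dvd (a * g y + b * h y - c)"
      using ln xy by (auto simp: dvd_eq_mod_eq_0)
    then have "p dvd (a * g x + b * h x - c) - (a * g y + b * h y - c)" by (rule dvd_diff)
    then have "p dvd b * (h x - h y)" using xy(3) by (simp add: algebra_simps)
    then have "p dvd (h x - h y)" using bnd pr by (simp add: prime_dvd_mult_iff)
    then have "h x mod p = h y mod p" by (simp add: mod_eq_dvd_iff)
    then have "h x = h y" using rng xy by auto
    then show "x = y" using inj xy by (auto dest: inj_onD)
  qed
  define S' where "S' = image_mset g S"
  define n where "n = size S"
  define k where "k = n - nat p"
  have kint: "int k = int n - p" using big p0 unfolding k_def n_def by linarith
  have setS': "set_mset S' \<subseteq> {0..<p}" using rng by (auto simp: S'_def)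
  have sizeS': "size S' = n" by (simp add: S'_def n_def)
  have k1: "1 \<le> k" using kint big p2 unfolding n_def by linarith
  have kn: "k \<le> size S'" using sizeS' k_def by simp
  have cS': "count S' v \<le> k" for v
  proof (cases "\<exists>x0. x0 \<in># S \<and> g x0 = v")
    case True
    then obtain x0 where x0: "x0 \<in># S" "g x0 = v" by blast
    have "{x. x \<in># S \<and> v = g x} = {x0}" using x0 injg by (auto dest: inj_onD)
    then have "count S' v = count S x0" by (simp add: S'_def count_image_mset')
    then show ?thesis using cnt[rule_format, of x0] kint big unfolding n_def by linarith
  next
    case False
    then have "v \<notin># S'" by (auto simp: S'_def)
    then show ?thesis by (simp add: not_in_iff)
  qed
  have "min p (int (size S') - int k + 1) \<le> int (card (ksums p S' k))"
    by (rule ksums_bound[OF pr k1 setS' kn cS'])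
  then have "p \<le> int (card (ksums p S' k))" using kint sizeS' by simp
  then have "card {0..<p} \<le> card (ksums p S' k)" by simp
  then have KS: "ksums p S' k = {0..<p}"
    by (intro card_seteq ksums_sub[OF p0]) auto
  have "(\<Sum>\<^sub># S') mod p \<in> ksums p S' k" using KS p0 by simp
  then obtain T where T: "T \<subseteq># S'" "size T = k" "(\<Sum>\<^sub># T) mod p = (\<Sum>\<^sub># S') mod p"
    unfolding ksums_def by auto
  define R where "R = S' - T"
  have SRT: "S' = R + T" using T(1) by (simp add: R_def)
  then have "p dvd (\<Sum>\<^sub># S') - (\<Sum>\<^sub># T)" using T(3) by (simp add: mod_eq_dvd_iff)
  then have Rdvd: "p dvd (\<Sum>\<^sub># R)" using SRT by simp
  have sizeR: "int (size R) = p"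
  proof -
    have "size S' = size R + size T" using SRT by simp
    then show ?thesis using T(2) sizeS' kint by linarith
  qed
  have "R \<subseteq># image_mset g S" using SRT by (simp add: S'_def[symmetric])
  then obtain B where B: "B \<subseteq># S" "image_mset g B = R" using lift_sub by blast
  have sizeB: "int (size B) = p" using B sizeR by (metis size_image_mset)
  have G: "p dvd (\<Sum>\<^sub># (image_mset g B))" using B Rdvd by simp
  have "\<forall>x\<in>#B. p dvd (a * g x + b * h x - c)"
    using ln B(1) by (auto simp: dvd_eq_mod_eq_0 dest: mset_subset_eqD)
  then have "p dvd (\<Sum>\<^sub># (image_mset (\<lambda>x. a * g x + b * h x - c) B))" by (rule dvd_sum_img)
  then have "p dvd a * (\<Sum>\<^sub># (image_mset g B)) + b * (\<Sum>\<^sub># (image_mset h B)) - p * c"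
    using sizeB by (simp add: sum_lin)
  moreover have "p dvd a * (\<Sum>\<^sub># (image_mset g B))" using G by simp
  moreover have "p dvd p * c" by simp
  ultimately have "p dvd b * (\<Sum>\<^sub># (image_mset h B))" by (rule dvd_help)
  then have H: "p dvd (\<Sum>\<^sub># (image_mset h B))" using bnd pr by (simp add: prime_dvd_mult_iff)
  show ?thesis using B(1) sizeB G H by (auto simp: dvd_eq_mod_eq_0)
qed


theorem corollary2p4:
  fixes p :: int and A :: "(int \<times> int) multiset"
  assumes "prime p"
    and "set_mset A \<subseteq> zp2 p"
    and "int (size A) = 4 * p - 4"
    and "\<not> (\<exists>B. B \<subseteq># A \<and> int (size B) = p \<and> zero_sum_zp2 p B)"
    and "\<And>x. real (count A x) < real_of_int p / 2"
  shows "\<forall>L. line_zp2 p L \<longrightarrow> real (size (filter_mset (\<lambda>x. x \<in> L) A)) < 3 * real_of_int p / 2"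
proof (intro allI impI)
  fix L assume "line_zp2 p L"
  then obtain a b c where abc: "\<not> (a mod p = 0 \<and> b mod p = 0)"
    and L: "L = {x \<in> zp2 p. (a * fst x + b * snd x - c) mod p = 0}"
    unfolding line_zp2_def by blast
  define S where "S = filter_mset (\<lambda>x. x \<in> L) A"
  show "real (size S) < 3 * real_of_int p / 2"
  proof (rule ccontr)
    assume "\<not> ?thesis"
    then have "3 * real_of_int p \<le> 2 * real (size S)" by simp
    then have "real_of_int (3 * p) \<le> real_of_int (2 * int (size S))" by simp
    then have big: "3 * p \<le> 2 * int (size S)" by (simp only: of_int_le_iff)
    have SA: "S \<subseteq># A" by (simp add: S_def multiset_filter_subset)
    have memS: "x \<in> zp2 p \<and> (a * fst x + b * snd x - c) mod p = 0" if "x \<in># S" for x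
      using that by (auto simp: S_def L)
    have rng: "\<forall>x\<in>#S. fst x \<in> {0..<p} \<and> snd x \<in> {0..<p}"
      using memS by (auto simp: zp2_def)
    have cnt: "\<forall>x. 2 * int (count S x) < p"
    proof
      fix x
      have "count S x \<le> count A x" using SA by (rule mset_subset_eq_count)
      then have "real (count S x) \<le> real (count A x)" by (simp only: of_nat_le_iff)
      then have "2 * real (count S x) < real_of_int p" using assms(5)[of x] by linarith
      then have "real_of_int (2 * int (count S x)) < real_of_int p" by simp
      then show "2 * int (count S x) < p" by (simp only: of_int_less_iff)
    qed
    have zs: False if "B \<subseteq># S" "int (size B) = p" "(\<Sum>\<^sub># (image_mset fst B)) mod p = 0"
        "(\<Sum>\<^sub># (image_mset snd B)) mod p = 0" for B
    proof -
      have "B \<subseteq># A" using that(1) SA by (rule subset_mset.order_trans)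
      moreover have "zero_sum_zp2 p B" using that(3,4) by (simp add: zero_sum_zp2_def)
      ultimately show False using assms(4) that(2) by blast
    qed
    show False
    proof (cases "b mod p = 0")
      case False
      have "\<exists>B. B \<subseteq># S \<and> int (size B) = p \<and> (\<Sum>\<^sub># (image_mset fst B)) mod p = 0
            \<and> (\<Sum>\<^sub># (image_mset snd B)) mod p = 0"
      proof (rule key[OF assms(1) rng _ False _ cnt big, of a c])
        show "\<forall>x\<in>#S. (a * fst x + b * snd x - c) mod p = 0" using memS by blast
        show "inj_on (\<lambda>x. (fst x, snd x)) (set_mset S)" by (simp add: inj_on_def)
      qed
      then show False by (elim exE conjE) (erule zs; assumption)
    next
      case True
      then have anz: "a mod p \<noteq> 0" using abc by simp
      have rng': "\<forall>x\<in>#S. snd x \<in> {0..<p} \<and> fst x \<in> {0..<p}" using rng by blast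
      have "\<exists>B. B \<subseteq># S \<and> int (size B) = p \<and> (\<Sum>\<^sub># (image_mset snd B)) mod p = 0
            \<and> (\<Sum>\<^sub># (image_mset fst B)) mod p = 0"
      proof (rule key[OF assms(1) rng' _ anz _ cnt big, of b c])
        show "\<forall>x\<in>#S. (b * snd x + a * fst x - c) mod p = 0"
        proof
          fix x assume "x \<in># S"
          then have "(a * fst x + b * snd x - c) mod p = 0" using memS by blast
          moreover have eq: "b * snd x + a * fst x - c = a * fst x + b * snd x - c" by simp
          ultimately show "(b * snd x + a * fst x - c) mod p = 0" by (simp only: eq)
        qed
        show "inj_on (\<lambda>x. (snd x, fst x)) (set_mset S)" by (simp add: inj_on_def prod_eq_iff)
      qed
      then show False by (elim exE conjE) (erule zs; assumption)
    qed
  qed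
qed

end
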